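(* Let $A,B\in\mathbb{C}^{n\times n}$ be Hermitian positive semidefinite matrices. For any integers $k,h\ge1$ with $kh+1\le n$, \[ \lambda_{kh+1}(A\circ B)\le\lambda_1(B)\,\mathrm{Tr}(A_{>k})+\lambda_1(A)\,\mathrm{Tr}(B_{>h})+\mathrm{Tr}(A_{>k})\,\mathrm{Tr}(B_{>h}), \] where $\mathrm{Tr}(M_{>r}):=\sum_{j=r+1}^{n}\lambda_j(M)$.
   Context: For a Hermitian matrix $M$, $\lambda_1(M)\ge\lambda_2(M)\ge\dots\ge\lambda_n(M)$ denote its eigenvalues in decreasing order. $A\circ B$ denotes the entrywise (Hadamard) product. *)

theory Defs
  imports "Jordan_Normal_Form.Schur_Decomposition" "HOL-Computational_Algebra.Fundamental_Theorem_Algebra"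
begin

definition hermitian :: "complex mat \<Rightarrow> bool" where
  "hermitian A \<longleftrightarrow> A \<in> carrier_mat (dim_row A) (dim_row A) \<and> mat_adjoint A = A"

definition psd :: "complex mat \<Rightarrow> bool" where
  "psd A \<longleftrightarrow> hermitian A \<and>
     (\<forall>x \<in> carrier_vec (dim_row A). Re (\<Sum>i<dim_row A. cnj (x $ i) * (A *\<^sub>v x) $ i) \<ge> 0)"

definition eigvals_desc :: "complex mat \<Rightarrow> real list" where
  "eigvals_desc M = rev (sorted_list_of_multiset (image_mset Re (proots (char_poly M))))"

(* lambda j M, 1-indexed: lambda_1 \<ge> lambda_2 \<ge> ... \<ge> lambda_n *)
definition eig :: "nat \<Rightarrow> complex mat \<Rightarrow> real" where
  "eig j M = eigvals_desc M ! (j - 1)"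

definition tail_trace :: "nat \<Rightarrow> complex mat \<Rightarrow> real" where
  "tail_trace r M = (\<Sum>j = r + 1..dim_row M. eig j M)"

definition hadamard :: "complex mat \<Rightarrow> complex mat \<Rightarrow> complex mat" where
  "hadamard A B = mat (dim_row A) (dim_col A) (\<lambda>(i, j). A $$ (i, j) * B $$ (i, j))"

end

theory Submission
  imports Defs
begin


lemma adj_dims[simp]: "dim_row (mat_adjoint A) = dim_col A" "dim_col (mat_adjoint A) = dim_row A"
  unfolding mat_adjoint_def by (auto simp: mat_of_rows_def)

lemma adj_index[simp]: "i < dim_col A \<Longrightarrow> j < dim_row A \<Longrightarrow> mat_adjoint (A::complex mat) $$ (i,j) = cnj (A $$ (j,i))"
  unfolding mat_adjoint_def by (auto simp: mat_of_rows_def)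

lemma adj_carrier[simp]: "A \<in> carrier_mat n m \<Longrightarrow> mat_adjoint A \<in> carrier_mat m n"
  unfolding carrier_mat_def by simp

lemma adj_adj[simp]: "mat_adjoint (mat_adjoint (A::complex mat)) = A"
  by (rule eq_matI) simp_all

lemma adj_mult: assumes "(A::complex mat) \<in> carrier_mat n m" "B \<in> carrier_mat m p"
  shows "mat_adjoint (A * B) = mat_adjoint B * mat_adjoint A"
proof (rule eq_matI)
  fix i j assume ij: "i < dim_row (mat_adjoint B * mat_adjoint A)" "j < dim_col (mat_adjoint B * mat_adjoint A)"
  then have i: "i < p" and j: "j < n" using assms by auto
  have "mat_adjoint (A * B) $$ (i, j) = cnj (\<Sum>k<m. A $$ (j,k) * B $$ (k,i))"
    using assms i j by (simp add: scalar_prod_def atLeast0LessThan)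
  also have "\<dots> = (\<Sum>k<m. cnj (B $$ (k,i)) * cnj (A $$ (j,k)))"
    by (simp add: mult.commute)
  also have "\<dots> = (mat_adjoint B * mat_adjoint A) $$ (i, j)"
    using assms i j by (simp add: scalar_prod_def atLeast0LessThan)
  finally show "mat_adjoint (A * B) $$ (i, j) = (mat_adjoint B * mat_adjoint A) $$ (i, j)" .
qed (use assms in auto)

lemma cself_real: fixes w :: "complex vec"
  shows "w \<bullet>c w = of_real (\<Sum>i<dim_vec w. (cmod (w$i))^2)"
proof -
  have "\<And>z. z * cnj z = complex_of_real ((cmod z)^2)" by (simp only: complex_norm_square)
  then show ?thesis unfolding scalar_prod_def of_real_sum
    by (simp add: atLeast0LessThan del: of_real_power)
qed

definition nrm :: "complex vec \<Rightarrow> complex vec" where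
  "nrm w = of_real (1 / sqrt (\<Sum>i<dim_vec w. (cmod (w$i))^2)) \<cdot>\<^sub>v w"

lemma smult_cscalar: fixes v w :: "complex vec"
  assumes "dim_vec w = dim_vec v"
  shows "(a \<cdot>\<^sub>v v) \<bullet>c (b \<cdot>\<^sub>v w) = a * cnj b * (v \<bullet>c w)"
  using assms by (simp add: scalar_prod_def sum_distrib_left algebra_simps)

lemma nrm_dim[simp]: "dim_vec (nrm w) = dim_vec w" by (simp add: nrm_def)
lemma nrm_carrier[simp]: "w \<in> carrier_vec n \<Longrightarrow> nrm w \<in> carrier_vec n" by (simp add: nrm_def)

lemma nrm_cscalar: fixes v w :: "complex vec"
  assumes "dim_vec w = dim_vec v"
  shows "nrm v \<bullet>c nrm w = of_real (1 / sqrt (\<Sum>i<dim_vec v. (cmod (v$i))^2)) *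
     of_real (1 / sqrt (\<Sum>i<dim_vec w. (cmod (w$i))^2)) * (v \<bullet>c w)"
  unfolding nrm_def using assms by (subst smult_cscalar) auto

lemma nrm_self: fixes v :: "complex vec"
  assumes "v \<bullet>c v \<noteq> 0"
  shows "nrm v \<bullet>c nrm v = 1"
proof -
  define s where "s = (\<Sum>i<dim_vec v. (cmod (v$i))^2)"
  have vv: "v \<bullet>c v = of_real s" unfolding s_def by (rule cself_real)
  have "s \<ge> 0" unfolding s_def by (auto intro: sum_nonneg)
  moreover have "s \<noteq> 0" using assms vv by auto
  ultimately have s: "s > 0" by auto
  have "nrm v \<bullet>c nrm v = of_real (1 / sqrt s) * of_real (1 / sqrt s) * of_real s"
    using nrm_cscalar[of v v] vv unfolding s_def by simp
  also have "\<dots> = of_real (1 / sqrt s * (1 / sqrt s) * s)" by (simp only: of_real_mult)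
  also have "1 / sqrt s * (1 / sqrt s) * s = 1" using s
    by (simp add: field_simps)
  finally show ?thesis by simp
qed

lemma nrm_orth: fixes v w :: "complex vec"
  assumes "dim_vec w = dim_vec v" "v \<bullet>c w = 0"
  shows "nrm v \<bullet>c nrm w = 0"
  using nrm_cscalar[OF assms(1)] assms(2) by simp

lemma nrm_eigen: assumes "A \<in> carrier_mat n n" "v \<in> carrier_vec n" "A *\<^sub>v v = e \<cdot>\<^sub>v v"
  shows "A *\<^sub>v nrm v = e \<cdot>\<^sub>v nrm v"
  using assms unfolding nrm_def by (simp add: mult_mat_vec smult_smult_assoc mult.commute)

definition diagm :: "complex list \<Rightarrow> complex mat" where
  "diagm es = mat (length es) (length es) (\<lambda>(i,j). if i = j then es!i else 0)"

lemma adj_four_block: assumes "U \<in> carrier_mat m m"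
  shows "mat_adjoint (four_block_mat (1\<^sub>m 1) (0\<^sub>m 1 m) (0\<^sub>m m 1) (U::complex mat))
    = four_block_mat (1\<^sub>m 1) (0\<^sub>m 1 m) (0\<^sub>m m 1) (mat_adjoint U)"
  by (rule eq_matI) (use assms in auto)

lemma multn: "A \<in> carrier_mat n n \<Longrightarrow> B \<in> carrier_mat n n \<Longrightarrow> A * B \<in> carrier_mat n n"
  by auto

lemma spectral_aux:
  fixes A :: "complex mat"
  assumes "A \<in> carrier_mat n n" "mat_adjoint A = A" "char_poly A = (\<Prod>e\<leftarrow>es. [:-e,1:])"
  shows "\<exists>U. U \<in> carrier_mat n n \<and> mat_adjoint U * U = 1\<^sub>m n \<and> mat_adjoint U * A * U = diagm es"
  using assms
proof (induct es arbitrary: n A)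
  case Nil
  from degree_monic_char_poly[OF Nil(1)] Nil(3) have n: "n = 0" by simp
  show ?case
    by (rule exI[of _ "1\<^sub>m 0"]) (use Nil(1) n in \<open>auto intro!: eq_matI simp: diagm_def\<close>)
next
  case (Cons e es n A)
  note A = Cons(2) and herm = Cons(3)
  have cp: "char_poly A = [: -e, 1 :] * (\<Prod> e \<leftarrow> es. [:- e, 1:])" using Cons(4) by simp
  have mon: "monic (\<Prod>e\<leftarrow> es. [:- e, 1:])" by (rule monic_prod_list, auto)
  have deg: "degree (char_poly A) = Suc (degree (\<Prod>e\<leftarrow> es. [:- e, 1:]))" unfolding cp
    by (subst degree_mult_eq, insert mon, auto)
  with degree_monic_char_poly[OF A] have n: "n \<noteq> 0" by auto
  have ev: "eigenvalue A e" unfolding eigenvalue_root_char_poly[OF A] cp by simp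
  define v where "v = find_eigenvector A e"
  from find_eigenvector[OF A ev] have "eigenvector A v e" unfolding v_def .
  then have v: "v \<in> carrier_vec n" and v0: "v \<noteq> 0\<^sub>v n" and Av: "A *\<^sub>v v = e \<cdot>\<^sub>v v"
    using A unfolding eigenvector_def by auto
  interpret cof_vec_space n "TYPE(complex)" .
  define b where "b = basis_completion v"
  define ws where "ws = gram_schmidt n b"
  from basis_completion[OF v v0, folded b_def]
  have span_b: "span (set b) = carrier_vec n" and dist_b: "distinct b"
    and indep: "\<not> lin_dep (set b)" and b: "set b \<subseteq> carrier_vec n" and hdb: "hd b = v"
    and len_b: "length b = n" by auto
  from hdb len_b n obtain vs where bv: "b = v # vs" by (cases b, auto)
  from gram_schmidt_result[OF b dist_b indep refl, folded ws_def]
  have ws: "set ws \<subseteq> carrier_vec n" "corthogonal ws" "length ws = n"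
    by (auto simp: len_b)
  from gram_schmidt_hd[OF v, of vs, folded bv] have hdws: "hd ws = v" unfolding ws_def .
  define ws' where "ws' = map nrm ws"
  have ws'n: "length ws' = n" using ws by (simp add: ws'_def)
  have ws'c: "i < n \<Longrightarrow> ws' ! i \<in> carrier_vec n" for i
    using ws nth_mem[of i ws] unfolding ws'_def by (auto intro!: nrm_carrier)
  have ws'o: "i < n \<Longrightarrow> j < n \<Longrightarrow> ws' ! i \<bullet>c ws' ! j = (if i = j then 1 else 0)" for i j
  proof -
    assume i: "i < n" and j: "j < n"
    have ci: "ws ! i \<in> carrier_vec n" and cj: "ws ! j \<in> carrier_vec n" using ws i j by auto
    show ?thesis
    proof (cases "i = j")
      case True
      then show ?thesis using corthogonalD[OF ws(2), of i i] i ws unfolding ws'_def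
        by (auto intro: nrm_self)
    next
      case False
      then show ?thesis using corthogonalD[OF ws(2), of i j] i j ws ci cj unfolding ws'_def
        by (auto intro!: nrm_orth)
    qed
  qed
  have ws'0: "ws' ! 0 = nrm v" using hdws n ws unfolding ws'_def by (cases ws) auto
  define W where "W = mat_of_cols n ws'"
  have W: "W \<in> carrier_mat n n" unfolding W_def using ws'n by auto
  have Wij: "i < n \<Longrightarrow> j < n \<Longrightarrow> W $$ (i,j) = ws' ! j $ i" for i j
    unfolding W_def using ws'n by (simp add: mat_of_cols_index)
  have WW: "mat_adjoint W * W = 1\<^sub>m n"
  proof (rule eq_matI)
    fix i j assume "i < dim_row (1\<^sub>m n)" "j < dim_col (1\<^sub>m n)"
    then have i: "i < n" and j: "j < n" by auto
    have "(mat_adjoint W * W) $$ (i,j) = (\<Sum>p<n. cnj (ws' ! i $ p) * ws' ! j $ p)"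
      using W i j by (simp add: scalar_prod_def atLeast0LessThan Wij)
    also have "\<dots> = ws' ! j \<bullet>c ws' ! i"
      using ws'c[OF i] ws'c[OF j] by (simp add: scalar_prod_def atLeast0LessThan mult.commute)
    also have "\<dots> = 1\<^sub>m n $$ (i,j)" using ws'o[OF j i] i j by auto
    finally show "(mat_adjoint W * W) $$ (i,j) = 1\<^sub>m n $$ (i,j)" .
  qed (use W in auto)
  have WW2: "W * mat_adjoint W = 1\<^sub>m n"
    by (rule mat_mult_left_right_inverse[OF _ W WW]) (use W in auto)
  have colW0: "col W 0 = nrm v"
    unfolding W_def using n ws'n ws'0 ws'c[of 0] by (subst col_mat_of_cols) auto
  have Av1: "A *\<^sub>v col W 0 = e \<cdot>\<^sub>v col W 0" unfolding colW0 by (rule nrm_eigen[OF A v Av])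
  define A' where "A' = mat_adjoint W * A * W"
  have A': "A' \<in> carrier_mat n n" unfolding A'_def using W A by auto
  have hA': "mat_adjoint A' = A'"
  proof -
    have c1: "mat_adjoint W * A \<in> carrier_mat n n" using W A by auto
    have "mat_adjoint A' = mat_adjoint W * mat_adjoint (mat_adjoint W * A)"
      unfolding A'_def by (rule adj_mult[OF c1 W])
    also have "mat_adjoint (mat_adjoint W * A) = A * W"
      using adj_mult[of "mat_adjoint W" n n A n] W A herm by simp
    finally show ?thesis unfolding A'_def using W A by (simp add: assoc_mult_mat[of _ n n _ n _ n])
  qed
  have A'0: "i < n \<Longrightarrow> A' $$ (i,0) = (if i = 0 then e else 0)" for i
  proof -
    assume i: "i < n"
    have "col A' 0 = mat_adjoint W *\<^sub>v col (A * W) 0"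
    proof -
      have "A' = mat_adjoint W * (A * W)" unfolding A'_def
        by (rule assoc_mult_mat[of _ n n _ n _ n]) (use W A in auto)
      then show ?thesis using W A n by (simp only: col_mult2[of "mat_adjoint W" n n "A * W" n]) auto
    qed
    also have "col (A * W) 0 = e \<cdot>\<^sub>v col W 0" using col_mult2[OF A W, of 0] n Av1 by simp
    also have "mat_adjoint W *\<^sub>v (e \<cdot>\<^sub>v col W 0) = e \<cdot>\<^sub>v (mat_adjoint W *\<^sub>v col W 0)"
      by (rule mult_mat_vec[of _ n n]) (use W in auto)
    also have "mat_adjoint W *\<^sub>v col W 0 = col (mat_adjoint W * W) 0"
      by (rule col_mult2[of _ n n, symmetric]) (use W n in auto)
    also have "\<dots> = unit_vec n 0" unfolding WW using n by simp
    finally have "col A' 0 = e \<cdot>\<^sub>v unit_vec n 0" .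
    then have "col A' 0 $ i = (e \<cdot>\<^sub>v unit_vec n 0) $ i" by simp
    then show ?thesis using i A' by simp
  qed
  have A'0': "j < n \<Longrightarrow> A' $$ (0,j) = (if j = 0 then cnj e else 0)" for j
  proof -
    assume j: "j < n"
    have "A' $$ (0,j) = mat_adjoint A' $$ (0,j)" using hA' by simp
    also have "\<dots> = cnj (A' $$ (j,0))" using A' j n by simp
    finally show ?thesis using A'0[OF j] by simp
  qed
  have ereal: "cnj e = e" using A'0[of 0] A'0'[of 0] n by simp
  define A3 where "A3 = mat (n-1) (n-1) (\<lambda>(i,j). A' $$ (Suc i, Suc j))"
  define A1 where "A1 = mat 1 1 (\<lambda>_. e)"
  have A3: "A3 \<in> carrier_mat (n-1) (n-1)" unfolding A3_def by auto
  have A1: "A1 \<in> carrier_mat 1 1" unfolding A1_def by auto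
  have A'block: "A' = four_block_mat A1 (0\<^sub>m 1 (n-1)) (0\<^sub>m (n-1) 1) A3"
  proof (rule eq_matI)
    fix i j assume "i < dim_row (four_block_mat A1 (0\<^sub>m 1 (n-1)) (0\<^sub>m (n-1) 1) A3)"
      "j < dim_col (four_block_mat A1 (0\<^sub>m 1 (n-1)) (0\<^sub>m (n-1) 1) A3)"
    then have i: "i < n" and j: "j < n" using n A1 A3 by auto
    show "A' $$ (i, j) = four_block_mat A1 (0\<^sub>m 1 (n-1)) (0\<^sub>m (n-1) 1) A3 $$ (i, j)"
      using i j n A1 A3 A'0[OF i] A'0'[OF j] ereal
      by (cases i; cases j) (auto simp: A1_def A3_def)
  qed (use A' A1 A3 n in auto)
  have hA3: "mat_adjoint A3 = A3"
  proof (rule eq_matI)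
    fix i j assume "i < dim_row A3" "j < dim_col A3"
    then have i: "i < n - 1" and j: "j < n - 1" using A3 by auto
    have "A' $$ (Suc i, Suc j) = mat_adjoint A' $$ (Suc i, Suc j)" using hA' by simp
    also have "\<dots> = cnj (A' $$ (Suc j, Suc i))" using A' i j by simp
    finally show "mat_adjoint A3 $$ (i, j) = A3 $$ (i, j)" using i j by (simp add: A3_def)
  qed (use A3 in auto)
  have sim: "similar_mat A' A"
    unfolding similar_mat_def similar_mat_wit_def Let_def
    by (rule exI[of _ "mat_adjoint W"], rule exI[of _ W]) (use A' A W WW WW2 in \<open>auto simp: A'_def\<close>)
  have "char_poly A' = char_poly A1 * char_poly A3"
    unfolding A'block by (rule char_poly_four_block_zeros_col[OF A1 _ A3]) auto
  moreover have "char_poly A1 = [: -e,1 :]"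
    by (simp add: A1_def char_poly_defs det_def sign_def)
  moreover have "char_poly A' = [: -e,1 :] * (\<Prod> e \<leftarrow> es. [:- e, 1:])"
    using char_poly_similar[OF sim] cp by simp
  ultimately have cp3: "char_poly A3 = (\<Prod> e \<leftarrow> es. [:- e, 1:])"
    by (metis mult_cancel_left pCons_eq_0_iff zero_neq_one)
  from Cons(1)[OF A3 hA3 cp3] obtain U3 where U3: "U3 \<in> carrier_mat (n-1) (n-1)"
    and UU3: "mat_adjoint U3 * U3 = 1\<^sub>m (n-1)" and UAU3: "mat_adjoint U3 * A3 * U3 = diagm es" by auto
  have les: "length es = n - 1"
    using arg_cong[OF UAU3, of dim_row] U3 by (simp add: diagm_def)
  define P where "P = four_block_mat (1\<^sub>m 1) (0\<^sub>m 1 (n-1)) (0\<^sub>m (n-1) 1) U3"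
  have P: "P \<in> carrier_mat n n" unfolding P_def using U3 n by auto
  have Padj: "mat_adjoint P = four_block_mat (1\<^sub>m 1) (0\<^sub>m 1 (n-1)) (0\<^sub>m (n-1) 1) (mat_adjoint U3)"
    unfolding P_def by (rule adj_four_block[OF U3])
  have PP: "mat_adjoint P * P = 1\<^sub>m n"
    unfolding Padj unfolding P_def
    by (subst mult_four_block_mat[of _ 1 1 _ "n-1" _ "n-1"]) (use U3 UU3 n in auto)
  have PAP: "mat_adjoint P * A' * P = diagm (e # es)"
  proof -
    have "mat_adjoint P * A' = four_block_mat A1 (0\<^sub>m 1 (n-1)) (0\<^sub>m (n-1) 1) (mat_adjoint U3 * A3)"
      unfolding Padj A'block
      by (subst mult_four_block_mat[of _ 1 1 _ "n-1" _ "n-1"]) (use U3 A1 A3 n in auto)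
    then have "mat_adjoint P * A' * P = four_block_mat A1 (0\<^sub>m 1 (n-1)) (0\<^sub>m (n-1) 1) (mat_adjoint U3 * A3 * U3)"
      unfolding P_def
      by (simp, subst mult_four_block_mat[of _ 1 1 _ "n-1" _ "n-1"]) (use U3 A1 A3 n in auto)
    also have "\<dots> = diagm (e # es)" unfolding UAU3
      by (rule eq_matI) (use les n in \<open>auto simp: diagm_def A1_def nth_Cons'\<close>)
    finally show ?thesis .
  qed
  define U where "U = W * P"
  have U: "U \<in> carrier_mat n n" unfolding U_def using W P by auto
  have Uadj: "mat_adjoint U = mat_adjoint P * mat_adjoint W"
    unfolding U_def by (rule adj_mult[OF W P])
  have aP: "mat_adjoint P \<in> carrier_mat n n" and aW: "mat_adjoint W \<in> carrier_mat n n"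
    using P W by auto
  have "mat_adjoint U * U = mat_adjoint P * ((mat_adjoint W * W) * P)"
    unfolding Uadj unfolding U_def
    using assoc_mult_mat[OF aP aW, of "W * P" n] assoc_mult_mat[OF aW W P] W P by auto
  also have "\<dots> = 1\<^sub>m n" unfolding WW using P PP by simp
  finally have UU: "mat_adjoint U * U = 1\<^sub>m n" .
  have "mat_adjoint U * A * U = mat_adjoint P * A' * P"
    unfolding Uadj unfolding U_def A'_def
    using aP aW A W P by (simp add: assoc_mult_mat[of _ n n _ n _ n] multn[of _ n])
  with PAP have "mat_adjoint U * A * U = diagm (e # es)" by simp
  with U UU show ?case by blast
qed

lemma proots_linprod: "proots (\<Prod>e\<leftarrow>es. [:-e,1:]) = mset (es :: complex list)"
proof (induct es)
  case (Cons e es)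
  have nz: "(\<Prod>e\<leftarrow>es. [:-e,1:]) \<noteq> (0 :: complex poly)"
    by (auto simp: prod_list_zero_iff)
  have nz1: "[:-e,1:] \<noteq> (0 :: complex poly)" by simp
  have "proots (\<Prod>e\<leftarrow>e#es. [:-e,1:]) = proots ([:-e,1:] * (\<Prod>e\<leftarrow>es. [:-e,1:]))"
    by simp
  also have "\<dots> = proots [:-e,1:] + proots (\<Prod>e\<leftarrow>es. [:-e,1:])"
    by (intro proots_mult nz nz1)
  finally show ?case using Cons by simp
qed simp

lemma prod_list_linprod_mset: "(\<Prod>e\<leftarrow>es. [:-e,1:]) = prod_mset (image_mset (\<lambda>e. [:-e,1:]) (mset es))"
  by (simp add: prod_mset_prod_list[symmetric])

lemma spectral_index:
  fixes A :: "complex mat"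
  assumes A: "A \<in> carrier_mat n n" and h: "hermitian A"
  shows "\<exists>U d. U \<in> carrier_mat n n \<and>
     (\<forall>i<n. \<forall>j<n. (\<Sum>p<n. cnj (U$$(p,i)) * U$$(p,j)) = (if i = j then 1 else 0)) \<and>
     (\<forall>p<n. \<forall>q<n. (\<Sum>i<n. U$$(p,i) * cnj (U$$(q,i))) = (if p = q then 1 else 0)) \<and>
     (\<forall>p<n. \<forall>q<n. A$$(p,q) = (\<Sum>i<n. of_real (d i) * U$$(p,i) * cnj (U$$(q,i)))) \<and>
     (\<forall>i<n. d i = eig (Suc i) A) \<and> (\<forall>i j. i \<le> j \<longrightarrow> j < n \<longrightarrow> d j \<le> d i)"
proof -
  have herm: "mat_adjoint A = A" using h unfolding hermitian_def by auto
  from char_poly_factorized[OF A] obtain as0 where cp0: "char_poly A = (\<Prod>a\<leftarrow>as0. [:- a, 1:])"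
    and las0: "length as0 = n" by auto
  from spectral_aux[OF A herm cp0] obtain U0 where U0: "U0 \<in> carrier_mat n n"
    and D0: "mat_adjoint U0 * A * U0 = diagm as0" by auto
  have aU0: "mat_adjoint U0 \<in> carrier_mat n n" using U0 by auto
  have adjD: "mat_adjoint (diagm as0) = diagm as0"
  proof -
    have c1: "mat_adjoint U0 * A \<in> carrier_mat n n" using U0 A by auto
    have "mat_adjoint (mat_adjoint U0 * A * U0) = mat_adjoint U0 * mat_adjoint (mat_adjoint U0 * A)"
      by (rule adj_mult[OF c1 U0])
    also have "mat_adjoint (mat_adjoint U0 * A) = A * U0"
      using adj_mult[OF aU0 A] herm by simp
    finally show ?thesis unfolding D0[symmetric] using U0 A aU0
      by (simp add: assoc_mult_mat[of _ n n _ n _ n] multn[of _ n])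
  qed
  then have real0: "i < n \<Longrightarrow> cnj (as0 ! i) = as0 ! i" for i
  proof -
    assume i: "i < n"
    have dd: "dim_row (diagm as0) = n" "dim_col (diagm as0) = n" using las0 by (auto simp: diagm_def)
    have "mat_adjoint (diagm as0) $$ (i,i) = cnj (diagm as0 $$ (i,i))"
      by (rule adj_index) (use i dd in auto)
    then have "cnj (diagm as0 $$ (i,i)) = diagm as0 $$ (i,i)" using adjD by simp
    then show ?thesis using i las0 by (simp add: diagm_def)
  qed
  have real0': "a \<in> set as0 \<Longrightarrow> complex_of_real (Re a) = a" for a
  proof -
    assume "a \<in> set as0"
    then obtain i where i: "i < n" and a: "a = as0 ! i" using las0 by (auto simp: in_set_conv_nth)
    have c: "cnj a = a" using real0[OF i] a by simp
    from arg_cong[OF c, of Im] have "Im a = 0" by simp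
    then show ?thesis by (simp add: complex_eq_iff)
  qed
  have pr: "proots (char_poly A) = mset as0" unfolding cp0 by (rule proots_linprod)
  define ev where "ev = eigvals_desc A"
  have mev: "mset ev = image_mset Re (mset as0)"
    unfolding ev_def eigvals_desc_def pr by simp
  have lev: "length ev = n" using arg_cong[OF mev, of size] las0 by simp
  have sev: "sorted (rev ev)" unfolding ev_def eigvals_desc_def by simp
  define es where "es = map complex_of_real ev"
  have mes: "mset es = mset as0"
  proof -
    have "mset es = image_mset (\<lambda>a. complex_of_real (Re a)) (mset as0)"
      unfolding es_def mset_map mev by (simp add: multiset.map_comp comp_def)
    also have "\<dots> = image_mset id (mset as0)"
      by (rule multiset.map_cong0) (simp add: real0')
    finally show ?thesis by simp
  qed
  have cp: "char_poly A = (\<Prod>a\<leftarrow>es. [:- a, 1:])"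
    unfolding cp0 prod_list_linprod_mset mes ..
  from spectral_aux[OF A herm cp] obtain U where U: "U \<in> carrier_mat n n"
    and UU: "mat_adjoint U * U = 1\<^sub>m n" and D: "mat_adjoint U * A * U = diagm es" by auto
  have aU: "mat_adjoint U \<in> carrier_mat n n" using U by auto
  have UU2: "U * mat_adjoint U = 1\<^sub>m n"
    by (rule mat_mult_left_right_inverse[OF aU U UU])
  have les: "length es = n" using lev es_def by simp
  have Aeq: "A = U * diagm es * mat_adjoint U"
  proof -
    have "A = (U * mat_adjoint U) * A * (U * mat_adjoint U)" unfolding UU2 using A by simp
    also have "\<dots> = U * (mat_adjoint U * A * U) * mat_adjoint U"
      using U aU A by (simp add: assoc_mult_mat[of _ n n _ n _ n] multn[of _ n])
    finally show ?thesis unfolding D .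
  qed
  define d where "d i = ev ! i" for i
  have col_on: "\<forall>i<n. \<forall>j<n. (\<Sum>p<n. cnj (U$$(p,i)) * U$$(p,j)) = (if i = j then 1 else 0)"
  proof (intro allI impI)
    fix i j assume i: "i < n" and j: "j < n"
    have "(mat_adjoint U * U) $$ (i,j) = (\<Sum>p<n. cnj (U$$(p,i)) * U$$(p,j))"
      using U i j by (simp add: scalar_prod_def atLeast0LessThan)
    then show "(\<Sum>p<n. cnj (U$$(p,i)) * U$$(p,j)) = (if i = j then 1 else 0)"
      unfolding UU using i j by simp
  qed
  have row_on: "\<forall>p<n. \<forall>q<n. (\<Sum>i<n. U$$(p,i) * cnj (U$$(q,i))) = (if p = q then 1 else 0)"
  proof (intro allI impI)
    fix i j assume i: "i < n" and j: "j < n"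
    have "(U * mat_adjoint U) $$ (i,j) = (\<Sum>p<n. U$$(i,p) * cnj (U$$(j,p)))"
      using U i j by (simp add: scalar_prod_def atLeast0LessThan)
    then show "(\<Sum>p<n. U$$(i,p) * cnj (U$$(j,p))) = (if i = j then 1 else 0)"
      unfolding UU2 using i j by simp
  qed
  have UDi: "(U * diagm es) $$ (p,i) = U $$ (p,i) * es ! i" if p: "p < n" and i: "i < n" for p i
  proof -
    have "(U * diagm es) $$ (p,i) = (\<Sum>l<n. U $$ (p,l) * (if l = i then es ! l else 0))"
      using U p i les by (simp add: scalar_prod_def atLeast0LessThan diagm_def)
    also have "\<dots> = U $$ (p,i) * es ! i" using i
    proof -
      have "(\<Sum>l<n. U $$ (p,l) * (if l = i then es ! l else 0)) = (\<Sum>l<n. if l = i then U $$ (p,l) * es ! l else 0)"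
        by (intro sum.cong) auto
      then show ?thesis using i by simp
    qed
    finally show ?thesis .
  qed
  have entries: "\<forall>p<n. \<forall>q<n. A$$(p,q) = (\<Sum>i<n. of_real (d i) * U$$(p,i) * cnj (U$$(q,i)))"
  proof (intro allI impI)
    fix p q assume p: "p < n" and q: "q < n"
    have "A $$ (p,q) = (\<Sum>i<n. (U * diagm es) $$ (p,i) * mat_adjoint U $$ (i,q))"
      using U p q les by (subst Aeq) (simp add: scalar_prod_def atLeast0LessThan diagm_def)
    also have "\<dots> = (\<Sum>i<n. of_real (d i) * U$$(p,i) * cnj (U$$(q,i)))"
      using U p q les UDi[OF p] by (intro sum.cong refl) (simp add: d_def es_def lev)
    finally show "A$$(p,q) = (\<Sum>i<n. of_real (d i) * U$$(p,i) * cnj (U$$(q,i)))" .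
  qed
  have deig: "\<forall>i<n. d i = eig (Suc i) A" by (simp add: d_def eig_def ev_def)
  have dsort: "\<forall>i j. i \<le> j \<longrightarrow> j < n \<longrightarrow> d j \<le> d i"
    using sorted_rev_nth_mono[OF sev] lev by (simp add: d_def)
  show ?thesis using U col_on row_on entries deig dsort by blast
qed



lemma quad_expand:
  fixes M :: "nat \<Rightarrow> nat \<Rightarrow> complex" and f :: "'t \<Rightarrow> nat \<Rightarrow> complex" and w :: "'t \<Rightarrow> real"
  assumes "\<forall>p<n. \<forall>q<n. M p q = (\<Sum>t\<in>T. of_real (w t) * f t p * cnj (f t q))"
  shows "(\<Sum>p<n. \<Sum>q<n. cnj (x p) * M p q * x q) = of_real (\<Sum>t\<in>T. w t * (cmod (\<Sum>q<n. cnj (f t q) * x q))^2)"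
proof -
  have "(\<Sum>p<n. \<Sum>q<n. cnj (x p) * M p q * x q) =
        (\<Sum>p<n. \<Sum>q<n. \<Sum>t\<in>T. of_real (w t) * (cnj (x p) * f t p) * (cnj (f t q) * x q))"
    using assms by (intro sum.cong refl) (simp add: sum_distrib_left sum_distrib_right mult_ac)
  also have "\<dots> = (\<Sum>p<n. \<Sum>t\<in>T. \<Sum>q<n. of_real (w t) * (cnj (x p) * f t p) * (cnj (f t q) * x q))"
    by (intro sum.cong refl sum.swap)
  also have "\<dots> = (\<Sum>t\<in>T. \<Sum>p<n. \<Sum>q<n. of_real (w t) * (cnj (x p) * f t p) * (cnj (f t q) * x q))"
    by (rule sum.swap)
  also have "\<dots> = (\<Sum>t\<in>T. of_real (w t) * (cnj (\<Sum>q<n. cnj (f t q) * x q) * (\<Sum>q<n. cnj (f t q) * x q)))"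
    by (intro sum.cong refl) (simp add: sum_distrib_left sum_distrib_right mult_ac)
  also have "\<dots> = (\<Sum>t\<in>T. of_real (w t * (cmod (\<Sum>q<n. cnj (f t q) * x q))^2))"
  proof (intro sum.cong refl)
    fix t
    have "cnj z * z = complex_of_real ((cmod z)^2)" for z :: complex
      by (simp only: complex_norm_square mult.commute)
    then show "of_real (w t) * (cnj (\<Sum>q<n. cnj (f t q) * x q) * (\<Sum>q<n. cnj (f t q) * x q))
        = complex_of_real (w t * (cmod (\<Sum>q<n. cnj (f t q) * x q))^2)"
      by (simp only: of_real_mult)
  qed
  also have "\<dots> = of_real (\<Sum>t\<in>T. w t * (cmod (\<Sum>q<n. cnj (f t q) * x q))^2)"
    by (simp only: of_real_sum)
  finally show ?thesis .
qed

lemma parseval: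
  fixes U :: "complex mat"
  assumes "\<forall>p<n. \<forall>q<n. (\<Sum>i<n. U$$(p,i) * cnj (U$$(q,i))) = (if p = q then 1 else 0)"
  shows "(\<Sum>i<n. (cmod (\<Sum>q<n. cnj (U$$(q,i)) * x q))^2) = (\<Sum>q<n. (cmod (x q))^2)"
proof -
  have e1: "(\<Sum>p<n. \<Sum>q<n. cnj (x p) * (if p = q then 1 else 0) * x q)
     = of_real (\<Sum>i\<in>{..<n}. 1 * (cmod (\<Sum>q<n. cnj (U$$(q,i)) * x q))^2)"
    by (rule quad_expand[where M = "\<lambda>p q. if p = q then 1 else 0" and f = "\<lambda>i p. U$$(p,i)"])
       (use assms in simp)
  have e2: "(\<Sum>p<n. \<Sum>q<n. cnj (x p) * (if p = q then 1 else 0) * x q) = (\<Sum>p<n. cnj (x p) * x p)"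
  proof (intro sum.cong refl)
    fix p assume p: "p \<in> {..<n}"
    have "(\<Sum>q<n. cnj (x p) * (if p = q then 1 else 0) * x q) = (\<Sum>q<n. if p = q then cnj (x p) * x q else 0)"
      by (intro sum.cong) auto
    then show "(\<Sum>q<n. cnj (x p) * (if p = q then 1 else 0) * x q) = cnj (x p) * x p" using p by simp
  qed
  have e3: "(\<Sum>p<n. cnj (x p) * x p) = of_real (\<Sum>q<n. (cmod (x q))^2)"
    by (simp add: of_real_sum complex_norm_square mult.commute del: of_real_power)
  have "complex_of_real (\<Sum>i\<in>{..<n}. 1 * (cmod (\<Sum>q<n. cnj (U$$(q,i)) * x q))^2) = of_real (\<Sum>q<n. (cmod (x q))^2)"
    using e1 e2 e3 by metis
  then show ?thesis by (simp only: of_real_eq_iff mult_1)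
qed



definition roworth :: "nat \<Rightarrow> complex mat \<Rightarrow> bool" where
  "roworth n U \<longleftrightarrow> (\<forall>p<n. \<forall>q<n. (\<Sum>i<n. U$$(p,i) * cnj (U$$(q,i))) = (if p = q then 1 else 0))"

lemma entry_le1:
  assumes "roworth n U" "q < n" "i < n"
  shows "(cmod (U$$(q,i)))^2 \<le> 1"
proof -
  have "(\<Sum>l<n. U$$(q,l) * cnj (U$$(q,l))) = 1" using assms unfolding roworth_def by auto
  moreover have "(\<Sum>l<n. U$$(q,l) * cnj (U$$(q,l))) = of_real (\<Sum>l<n. (cmod (U$$(q,l)))^2)"
    by (simp add: of_real_sum complex_norm_square del: of_real_power)
  ultimately have s: "(\<Sum>l<n. (cmod (U$$(q,l)))^2) = 1"
    by (metis of_real_eq_1_iff)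
  have "(cmod (U$$(q,i)))^2 \<le> (\<Sum>l<n. (cmod (U$$(q,l)))^2)"
    by (rule member_le_sum) (use assms in auto)
  then show ?thesis using s by simp
qed

lemma col_sum_bound:
  assumes U: "roworth n U" and V: "roworth n V" and j: "j < n"
  shows "(\<Sum>i<n. (cmod (\<Sum>q<n. cnj (U$$(q,i) * V$$(q,j)) * x q))^2) \<le> (\<Sum>q<n. (cmod (x q))^2)"
proof -
  have "(\<Sum>i<n. (cmod (\<Sum>q<n. cnj (U$$(q,i) * V$$(q,j)) * x q))^2)
      = (\<Sum>i<n. (cmod (\<Sum>q<n. cnj (U$$(q,i)) * (cnj (V$$(q,j)) * x q)))^2)"
    by (simp add: mult.assoc)
  also have "\<dots> = (\<Sum>q<n. (cmod (cnj (V$$(q,j)) * x q))^2)"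
    by (rule parseval) (use U in \<open>simp add: roworth_def\<close>)
  also have "\<dots> = (\<Sum>q<n. (cmod (V$$(q,j)))^2 * (cmod (x q))^2)"
    by (simp add: norm_mult power_mult_distrib)
  also have "\<dots> \<le> (\<Sum>q<n. 1 * (cmod (x q))^2)"
    by (intro sum_mono mult_right_mono entry_le1[OF V] j) auto
  finally show ?thesis by simp
qed

lemma row_sum_bound:
  assumes U: "roworth n U" and V: "roworth n V" and i: "i < n"
  shows "(\<Sum>j<n. (cmod (\<Sum>q<n. cnj (U$$(q,i) * V$$(q,j)) * x q))^2) \<le> (\<Sum>q<n. (cmod (x q))^2)"
proof -
  have "(\<Sum>j<n. (cmod (\<Sum>q<n. cnj (U$$(q,i) * V$$(q,j)) * x q))^2)
      = (\<Sum>j<n. (cmod (\<Sum>q<n. cnj (V$$(q,j) * U$$(q,i)) * x q))^2)"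
    by (simp add: mult.commute)
  also have "\<dots> \<le> (\<Sum>q<n. (cmod (x q))^2)"
    by (rule col_sum_bound[OF V U i])
  finally show ?thesis .
qed

lemma upper_bound:
  fixes a b :: "nat \<Rightarrow> real"
  assumes U: "roworth n U" and V: "roworth n V"
  and a0: "\<forall>i<n. 0 \<le> a i" and a1: "\<forall>i<n. a i \<le> a 0"
  and b0: "\<forall>j<n. 0 \<le> b j" and b1: "\<forall>j<n. b j \<le> b 0"
  and z0: "\<forall>i<k. \<forall>j<h. (\<Sum>q<n. cnj (U$$(q,i) * V$$(q,j)) * x q) = 0"
  shows "(\<Sum>(i,j)\<in>{..<n}\<times>{..<n}. a i * b j * (cmod (\<Sum>q<n. cnj (U$$(q,i) * V$$(q,j)) * x q))^2)
        \<le> (a 0 * (\<Sum>j<n. if h \<le> j then b j else 0) + b 0 * (\<Sum>i<n. if k \<le> i then a i else 0))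
           * (\<Sum>q<n. (cmod (x q))^2)"
proof -
  define Z where "Z i j = (cmod (\<Sum>q<n. cnj (U$$(q,i) * V$$(q,j)) * x q))^2" for i j
  define X where "X = (\<Sum>q<n. (cmod (x q))^2)"
  define F1 where "F1 i j = (if h \<le> j then a 0 * b j * Z i j else 0)" for i j
  define F2 where "F2 i j = (if k \<le> i then b 0 * a i * Z i j else 0)" for i j
  have Z0: "Z i j \<ge> 0" for i j unfolding Z_def by simp
  have pw: "a i * b j * Z i j \<le> F1 i j + F2 i j" if i: "i < n" and j: "j < n" for i j
  proof (cases "h \<le> j")
    case True
    have "a i * b j * Z i j \<le> a 0 * b j * Z i j"
      using a1 b0 Z0 i j by (intro mult_right_mono) auto
    moreover have "F2 i j \<ge> 0" unfolding F2_def using a0 b0 Z0 i j by auto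
    ultimately show ?thesis unfolding F1_def using True by simp
  next
    case False
    show ?thesis
    proof (cases "k \<le> i")
      case True
      have "a i * b j * Z i j \<le> b 0 * a i * Z i j"
        using a0 b1 Z0 i j by (simp add: mult.commute mult_right_mono mult_left_mono)
      moreover have "F1 i j = 0" unfolding F1_def using False by simp
      ultimately show ?thesis unfolding F2_def using True by simp
    next
      case False2: False
      then have "Z i j = 0" using z0 False unfolding Z_def by auto
      then show ?thesis unfolding F1_def F2_def using False False2 by simp
    qed
  qed
  have "(\<Sum>(i,j)\<in>{..<n}\<times>{..<n}. a i * b j * Z i j) = (\<Sum>i<n. \<Sum>j<n. a i * b j * Z i j)"
    by (simp add: sum.cartesian_product)
  also have "\<dots> \<le> (\<Sum>i<n. \<Sum>j<n. F1 i j + F2 i j)"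
    using pw by (intro sum_mono) auto
  also have "\<dots> = (\<Sum>i<n. \<Sum>j<n. F1 i j) + (\<Sum>i<n. \<Sum>j<n. F2 i j)"
    by (simp only: sum.distrib)
  also have "(\<Sum>i<n. \<Sum>j<n. F1 i j) = (\<Sum>j<n. \<Sum>i<n. F1 i j)"
    by (rule sum.swap)
  also have "(\<Sum>j<n. \<Sum>i<n. F1 i j) = (\<Sum>j<n. if h \<le> j then a 0 * b j * (\<Sum>i<n. Z i j) else 0)"
    unfolding F1_def by (intro sum.cong refl) (simp add: sum_distrib_left)
  also have "\<dots> \<le> (\<Sum>j<n. if h \<le> j then a 0 * b j * X else 0)"
  proof (intro sum_mono)
    fix j assume j: "j \<in> {..<n}"
    have "(\<Sum>i<n. Z i j) \<le> X" unfolding Z_def X_def using col_sum_bound[OF U V] j by auto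
    moreover have "a 0 * b j \<ge> 0" using a0 b0 j by auto
    ultimately show "(if h \<le> j then a 0 * b j * (\<Sum>i<n. Z i j) else 0) \<le> (if h \<le> j then a 0 * b j * X else 0)"
      by (simp add: mult_left_mono)
  qed
  also have "(\<Sum>i<n. \<Sum>j<n. F2 i j) = (\<Sum>i<n. if k \<le> i then b 0 * a i * (\<Sum>j<n. Z i j) else 0)"
    unfolding F2_def by (intro sum.cong refl) (simp add: sum_distrib_left)
  also have "\<dots> \<le> (\<Sum>i<n. if k \<le> i then b 0 * a i * X else 0)"
  proof (intro sum_mono)
    fix i assume i: "i \<in> {..<n}"
    have "(\<Sum>j<n. Z i j) \<le> X" unfolding Z_def X_def using row_sum_bound[OF U V] i by auto
    moreover have "b 0 * a i \<ge> 0" using a0 b0 i by auto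
    ultimately show "(if k \<le> i then b 0 * a i * (\<Sum>j<n. Z i j) else 0) \<le> (if k \<le> i then b 0 * a i * X else 0)"
      by (simp add: mult_left_mono)
  qed
  also have "(\<Sum>j<n. if h \<le> j then a 0 * b j * X else 0) + (\<Sum>i<n. if k \<le> i then b 0 * a i * X else 0)
     = (a 0 * (\<Sum>j<n. if h \<le> j then b j else 0) + b 0 * (\<Sum>i<n. if k \<le> i then a i else 0)) * X"
  proof -
    have e1: "(\<Sum>j<n. if h \<le> j then a 0 * b j * X else 0) = (\<Sum>j<n. a 0 * ((if h \<le> j then b j else 0) * X))"
      by (intro sum.cong) auto
    have e2: "(\<Sum>i<n. if k \<le> i then b 0 * a i * X else 0) = (\<Sum>i<n. b 0 * ((if k \<le> i then a i else 0) * X))"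
      by (intro sum.cong) auto
    show ?thesis unfolding e1 e2 sum_distrib_left[symmetric] sum_distrib_right[symmetric]
      by (simp only: distrib_right mult.assoc)
  qed
  finally show ?thesis unfolding Z_def X_def by simp
qed



lemma coeff_recover:
  assumes colW: "\<forall>i<n. \<forall>j<n. (\<Sum>p<n. cnj (W$$(p,i)) * W$$(p,j)) = (if i = j then 1 else 0)"
  and x: "\<forall>q. x q = (\<Sum>l<n. g l * W$$(q,l))" and t: "t < n"
  shows "(\<Sum>q<n. cnj (W$$(q,t)) * x q) = g t"
proof -
  have "(\<Sum>q<n. cnj (W$$(q,t)) * x q) = (\<Sum>q<n. \<Sum>l<n. g l * (cnj (W$$(q,t)) * W$$(q,l)))"
    using x by (simp add: sum_distrib_left mult_ac)
  also have "\<dots> = (\<Sum>l<n. \<Sum>q<n. g l * (cnj (W$$(q,t)) * W$$(q,l)))"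
    by (rule sum.swap)
  also have "\<dots> = (\<Sum>l<n. g l * (if t = l then 1 else 0))"
    using colW t by (intro sum.cong refl) (simp add: sum_distrib_left[symmetric])
  also have "\<dots> = (\<Sum>l<n. if t = l then g l else 0)"
    by (intro sum.cong) auto
  also have "\<dots> = g t" using t by simp
  finally show ?thesis .
qed

lemma lower_bound:
  fixes c :: "nat \<Rightarrow> real"
  assumes colW: "\<forall>i<n. \<forall>j<n. (\<Sum>p<n. cnj (W$$(p,i)) * W$$(p,j)) = (if i = j then 1 else 0)"
  and rowW: "roworth n W"
  and Cent: "\<forall>p<n. \<forall>q<n. M p q = (\<Sum>i<n. of_real (c i) * W$$(p,i) * cnj (W$$(q,i)))"
  and cs: "\<forall>i j. i \<le> j \<longrightarrow> j < n \<longrightarrow> c j \<le> c i" and m: "m < n"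
  and g: "\<forall>l. m < l \<longrightarrow> g l = 0"
  and x: "\<forall>q. x q = (\<Sum>l<n. g l * W$$(q,l))"
  shows "(\<Sum>p<n. \<Sum>q<n. cnj (x p) * M p q * x q) = of_real (\<Sum>t<n. c t * (cmod (g t))^2)"
    and "c m * (\<Sum>t<n. (cmod (g t))^2) \<le> (\<Sum>t<n. c t * (cmod (g t))^2)"
    and "(\<Sum>q<n. (cmod (x q))^2) = (\<Sum>t<n. (cmod (g t))^2)"
proof -
  have z: "t < n \<Longrightarrow> (\<Sum>q<n. cnj (W$$(q,t)) * x q) = g t" for t
    by (rule coeff_recover[OF colW x])
  have "(\<Sum>p<n. \<Sum>q<n. cnj (x p) * M p q * x q)
     = of_real (\<Sum>t\<in>{..<n}. c t * (cmod (\<Sum>q<n. cnj (W$$(q,t)) * x q))^2)"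
    by (rule quad_expand[where f = "\<lambda>t p. W$$(p,t)"]) (use Cent in auto)
  also have "(\<Sum>t\<in>{..<n}. c t * (cmod (\<Sum>q<n. cnj (W$$(q,t)) * x q))^2) = (\<Sum>t<n. c t * (cmod (g t))^2)"
    using z by (intro sum.cong) auto
  finally show "(\<Sum>p<n. \<Sum>q<n. cnj (x p) * M p q * x q) = of_real (\<Sum>t<n. c t * (cmod (g t))^2)" .
  show "c m * (\<Sum>t<n. (cmod (g t))^2) \<le> (\<Sum>t<n. c t * (cmod (g t))^2)"
    unfolding sum_distrib_left
  proof (intro sum_mono)
    fix t assume t: "t \<in> {..<n}"
    show "c m * (cmod (g t))^2 \<le> c t * (cmod (g t))^2"
    proof (cases "t \<le> m")
      case True
      then have "c m \<le> c t" using cs m by auto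
      then show ?thesis by (intro mult_right_mono) auto
    next
      case False
      then show ?thesis using g by auto
    qed
  qed
  have "(\<Sum>t<n. (cmod (\<Sum>q<n. cnj (W$$(q,t)) * x q))^2) = (\<Sum>q<n. (cmod (x q))^2)"
    by (rule parseval) (use rowW in \<open>simp add: roworth_def\<close>)
  then show "(\<Sum>q<n. (cmod (x q))^2) = (\<Sum>t<n. (cmod (g t))^2)"
    using z by simp
qed

lemma psd_quad:
  assumes "psd A" "A \<in> carrier_mat n n" "xv \<in> carrier_vec n"
  shows "0 \<le> Re (\<Sum>p<n. \<Sum>q<n. cnj (xv$p) * A$$(p,q) * xv$q)"
proof -
  have eq: "(\<Sum>i<n. cnj (xv $ i) * (A *\<^sub>v xv) $ i) = (\<Sum>p<n. \<Sum>q<n. cnj (xv$p) * A$$(p,q) * xv$q)"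
    using assms(2,3) by (intro sum.cong refl)
      (simp add: scalar_prod_def atLeast0LessThan sum_distrib_left mult.assoc)
  have dr: "dim_row A = n" using assms(2) by auto
  from assms(1) have "\<forall>x\<in>carrier_vec n. 0 \<le> Re (\<Sum>i<n. cnj (x $ i) * (A *\<^sub>v x) $ i)"
    unfolding psd_def dr by blast
  then have "0 \<le> Re (\<Sum>i<n. cnj (xv $ i) * (A *\<^sub>v xv) $ i)" using assms(3) by blast
  then show ?thesis by (simp only: eq)
qed

lemma psd_eig_nonneg:
  assumes psd: "psd A" and A: "A \<in> carrier_mat n n"
  and colU: "\<forall>i<n. \<forall>j<n. (\<Sum>p<n. cnj (U$$(p,i)) * U$$(p,j)) = (if i = j then 1 else 0)"
  and Aent: "\<forall>p<n. \<forall>q<n. A$$(p,q) = (\<Sum>i<n. of_real (d i) * U$$(p,i) * cnj (U$$(q,i)))"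
  and i: "i < n"
  shows "0 \<le> d i"
proof -
  define xv where "xv = vec n (\<lambda>p. U$$(p,i))"
  have xv: "xv \<in> carrier_vec n" unfolding xv_def by simp
  have "(\<Sum>p<n. \<Sum>q<n. cnj (xv$p) * A$$(p,q) * xv$q)
     = of_real (\<Sum>t\<in>{..<n}. d t * (cmod (\<Sum>q<n. cnj (U$$(q,t)) * xv$q))^2)"
    by (rule quad_expand[where M = "\<lambda>p q. A$$(p,q)" and f = "\<lambda>t p. U$$(p,t)"]) (use Aent in auto)
  also have "(\<Sum>t\<in>{..<n}. d t * (cmod (\<Sum>q<n. cnj (U$$(q,t)) * xv$q))^2)
      = (\<Sum>t\<in>{..<n}. if t = i then d t else 0)"
  proof (intro sum.cong refl)
    fix t assume t: "t \<in> {..<n}"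
    have "(\<Sum>q<n. cnj (U$$(q,t)) * xv$q) = (\<Sum>q<n. cnj (U$$(q,t)) * U$$(q,i))"
      unfolding xv_def by (intro sum.cong) auto
    also have "\<dots> = (if t = i then 1 else 0)" using colU t i by auto
    finally show "d t * (cmod (\<Sum>q<n. cnj (U$$(q,t)) * xv$q))^2 = (if t = i then d t else 0)"
      by simp
  qed
  also have "\<dots> = d i" using i by simp
  finally have "(\<Sum>p<n. \<Sum>q<n. cnj (xv$p) * A$$(p,q) * xv$q) = of_real (d i)" .
  then show ?thesis using psd_quad[OF psd A xv] by simp
qed

lemma det_last_row_zero:
  fixes M :: "complex mat"
  assumes M: "M \<in> carrier_mat (Suc m) (Suc m)" and z: "\<forall>l<Suc m. M$$(m,l) = 0"
  shows "det M = 0"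
proof -
  have pz: "\<And>p. p permutes {0..<Suc m} \<Longrightarrow> (\<Prod>i = 0..<Suc m. M $$ (i, p i)) = 0"
  proof -
    fix p assume p: "p permutes {0..<Suc m}"
    have "p m \<in> {0..<Suc m}" using p by (simp add: permutes_in_image)
    then have "M $$ (m, p m) = 0" using z by auto
    then show "(\<Prod>i = 0..<Suc m. M $$ (i, p i)) = 0"
      by (intro prod_zero) auto
  qed
  have "det M = (\<Sum>p | p permutes {0..<Suc m}. signof p * (\<Prod>i = 0..<Suc m. M $$ (i, p i)))"
    using M unfolding det_def by (simp del: prod.op_ivl_Suc)
  also have "\<dots> = 0"
    by (intro sum.neutral ballI) (simp only: mem_Collect_eq pz mult_zero_right)
  finally show ?thesis .
qed



lemma tail_eq:
  assumes d: "\<forall>i<n. d i = eig (Suc i) M" and M: "dim_row M = n"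
  shows "tail_trace r M = (\<Sum>i<n. if r \<le> i then d i else 0)"
proof -
  have "tail_trace r M = (\<Sum>j\<in>Suc ` {r..<n}. eig j M)"
    unfolding tail_trace_def M
    by (simp add: image_Suc_atLeastLessThan atLeastLessThanSuc_atLeastAtMost)
  also have "\<dots> = (\<Sum>i\<in>{r..<n}. eig (Suc i) M)"
    by (subst sum.reindex) auto
  also have "\<dots> = (\<Sum>i\<in>{r..<n}. d i)" using d by (intro sum.cong) auto
  also have "\<dots> = (\<Sum>i<n. if r \<le> i then d i else 0)"
    by (rule sum.mono_neutral_cong_right[symmetric]) auto
  finally show ?thesis .
qed


theorem mainTheorem7:
  fixes A B :: "complex mat" and n k h :: nat
  assumes "A \<in> carrier_mat n n" and "B \<in> carrier_mat n n"
    and "psd A" and "psd B"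
    and "k \<ge> 1" and "h \<ge> 1" and "k * h + 1 \<le> n"
  shows "eig (k * h + 1) (hadamard A B)
    \<le> eig 1 B * tail_trace k A + eig 1 A * tail_trace h B + tail_trace k A * tail_trace h B"
proof -
  note A = assms(1) and B = assms(2) and psdA = assms(3) and psdB = assms(4)
  have hA: "hermitian A" using psdA unfolding psd_def by (rule conjunct1)
  have hB: "hermitian B" using psdB unfolding psd_def by (rule conjunct1)
  from spectral_index[OF A hA] obtain U a where
     colU: "\<forall>i<n. \<forall>j<n. (\<Sum>p<n. cnj (U$$(p,i)) * U$$(p,j)) = (if i = j then 1 else 0)"
     and rowU: "roworth n U"
     and Aent: "\<forall>p<n. \<forall>q<n. A$$(p,q) = (\<Sum>i<n. of_real (a i) * U$$(p,i) * cnj (U$$(q,i)))"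
     and aeig: "\<forall>i<n. a i = eig (Suc i) A" and asort: "\<forall>i j. i \<le> j \<longrightarrow> j < n \<longrightarrow> a j \<le> a i"
    unfolding roworth_def by (elim exE conjE) blast
  from spectral_index[OF B hB] obtain V b where
     colV: "\<forall>i<n. \<forall>j<n. (\<Sum>p<n. cnj (V$$(p,i)) * V$$(p,j)) = (if i = j then 1 else 0)"
     and rowV: "roworth n V"
     and Bent: "\<forall>p<n. \<forall>q<n. B$$(p,q) = (\<Sum>i<n. of_real (b i) * V$$(p,i) * cnj (V$$(q,i)))"
     and beig: "\<forall>i<n. b i = eig (Suc i) B" and bsort: "\<forall>i j. i \<le> j \<longrightarrow> j < n \<longrightarrow> b j \<le> b i"
    unfolding roworth_def by (elim exE conjE) blast
  define C where "C = hadamard A B"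
  have C: "C \<in> carrier_mat n n" unfolding C_def hadamard_def using A by auto
  have Cent0: "p < n \<Longrightarrow> q < n \<Longrightarrow> C$$(p,q) = A$$(p,q) * B$$(p,q)" for p q
    unfolding C_def hadamard_def using A by auto
  have adjA: "mat_adjoint A = A" and adjB: "mat_adjoint B = B" using hA hB unfolding hermitian_def by auto
  have Asym: "p < n \<Longrightarrow> q < n \<Longrightarrow> A$$(p,q) = cnj (A$$(q,p))" for p q
    using arg_cong[OF adjA, of "\<lambda>M. M$$(p,q)"] A by simp
  have Bsym: "p < n \<Longrightarrow> q < n \<Longrightarrow> B$$(p,q) = cnj (B$$(q,p))" for p q
    using arg_cong[OF adjB, of "\<lambda>M. M$$(p,q)"] B by simp
  have hC: "hermitian C"
    unfolding hermitian_def
  proof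
    show "C \<in> carrier_mat (dim_row C) (dim_row C)" using C by auto
    show "mat_adjoint C = C"
    proof (rule eq_matI)
      fix i j assume "i < dim_row C" "j < dim_col C"
      then have i: "i < n" and j: "j < n" using C by auto
      have "mat_adjoint C $$ (i,j) = cnj (C $$ (j,i))" using C i j by simp
      also have "\<dots> = cnj (A$$(j,i)) * cnj (B$$(j,i))" using Cent0[OF j i] by simp
      also have "\<dots> = A$$(i,j) * B$$(i,j)" using Asym[OF i j] Bsym[OF i j] by simp
      also have "\<dots> = C$$(i,j)" using Cent0[OF i j] by simp
      finally show "mat_adjoint C $$ (i,j) = C $$ (i,j)" .
    qed (use C in auto)
  qed
  from spectral_index[OF C hC] obtain W c where
     colW: "\<forall>i<n. \<forall>j<n. (\<Sum>p<n. cnj (W$$(p,i)) * W$$(p,j)) = (if i = j then 1 else 0)"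
     and rowW: "roworth n W"
     and Cent: "\<forall>p<n. \<forall>q<n. C$$(p,q) = (\<Sum>i<n. of_real (c i) * W$$(p,i) * cnj (W$$(q,i)))"
     and ceig: "\<forall>i<n. c i = eig (Suc i) C" and csort: "\<forall>i j. i \<le> j \<longrightarrow> j < n \<longrightarrow> c j \<le> c i"
    unfolding roworth_def by (elim exE conjE) blast
  have a0: "\<forall>i<n. 0 \<le> a i" using psd_eig_nonneg[OF psdA A colU Aent] by auto
  have b0: "\<forall>i<n. 0 \<le> b i" using psd_eig_nonneg[OF psdB B colV Bent] by auto
  have n0: "0 < n" using assms(7) by auto
  have a1: "\<forall>i<n. a i \<le> a 0" using asort by auto
  have b1: "\<forall>i<n. b i \<le> b 0" using bsort by auto
  define m where "m = k * h"
  have m: "m < n" using assms(7) unfolding m_def by auto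
  have hpos: "0 < h" using assms(6) by auto
  have Cent2: "\<forall>p<n. \<forall>q<n. C$$(p,q) = (\<Sum>t\<in>{..<n}\<times>{..<n}.
      of_real (a (fst t) * b (snd t)) * (U$$(p,fst t) * V$$(p,snd t)) * cnj (U$$(q,fst t) * V$$(q,snd t)))"
  proof (intro allI impI)
    fix p q assume p: "p < n" and q: "q < n"
    have "C$$(p,q) = (\<Sum>i<n. of_real (a i) * U$$(p,i) * cnj (U$$(q,i))) * (\<Sum>j<n. of_real (b j) * V$$(p,j) * cnj (V$$(q,j)))"
      using Cent0[OF p q] Aent Bent p q by simp
    also have "\<dots> = (\<Sum>i<n. \<Sum>j<n. (of_real (a i) * U$$(p,i) * cnj (U$$(q,i))) * (of_real (b j) * V$$(p,j) * cnj (V$$(q,j))))"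
      by (rule sum_product)
    also have "\<dots> = (\<Sum>t\<in>{..<n}\<times>{..<n}. (of_real (a (fst t)) * U$$(p,fst t) * cnj (U$$(q,fst t))) * (of_real (b (snd t)) * V$$(p,snd t) * cnj (V$$(q,snd t))))"
      by (simp add: sum.cartesian_product split_def)
    also have "\<dots> = (\<Sum>t\<in>{..<n}\<times>{..<n}.
      of_real (a (fst t) * b (snd t)) * (U$$(p,fst t) * V$$(p,snd t)) * cnj (U$$(q,fst t) * V$$(q,snd t)))"
      by (intro sum.cong refl) (simp add: mult_ac)
    finally show "C$$(p,q) = (\<Sum>t\<in>{..<n}\<times>{..<n}.
      of_real (a (fst t) * b (snd t)) * (U$$(p,fst t) * V$$(p,snd t)) * cnj (U$$(q,fst t) * V$$(q,snd t)))" .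
  qed
  define E where "E r l = (\<Sum>q<n. cnj (U$$(q, r div h) * V$$(q, r mod h)) * W$$(q,l))" for r l
  define Mx where "Mx = mat (Suc m) (Suc m) (\<lambda>(r,l). if r < m then E r l else 0)"
  have Mx: "Mx \<in> carrier_mat (Suc m) (Suc m)" unfolding Mx_def by auto
  have "det Mx = 0"
    by (rule det_last_row_zero[OF Mx]) (simp add: Mx_def)
  then obtain y where y: "y \<in> carrier_vec (Suc m)" and y0: "y \<noteq> 0\<^sub>v (Suc m)" and My: "Mx *\<^sub>v y = 0\<^sub>v (Suc m)"
    using det_0_iff_vec_prod_zero[OF Mx] by auto
  define g where "g l = (if l < Suc m then y$l else 0)" for l
  define x where "x q = (\<Sum>l<n. g l * W$$(q,l))" for q
  have gz: "\<forall>l. m < l \<longrightarrow> g l = 0" unfolding g_def by auto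
  have z0: "\<forall>i<k. \<forall>j<h. (\<Sum>q<n. cnj (U$$(q,i) * V$$(q,j)) * x q) = 0"
  proof (intro allI impI)
    fix i j assume i: "i < k" and j: "j < h"
    define r where "r = i * h + j"
    have rdiv: "r div h = i" and rmod: "r mod h = j" unfolding r_def using j by auto
    have "r < m" unfolding r_def m_def
    proof -
      have "i * h + j < i * h + h" using j by simp
      also have "\<dots> = Suc i * h" by simp
      also have "\<dots> \<le> k * h" using i by (intro mult_right_mono) auto
      finally show "i * h + j < k * h" .
    qed
    have "(Mx *\<^sub>v y) $ r = 0" using My \<open>r < m\<close> by simp
    then have e: "(\<Sum>l<Suc m. E r l * y $ l) = 0"
      using \<open>r < m\<close> y by (simp add: Mx_def scalar_prod_def atLeast0LessThan)
    have "(\<Sum>q<n. cnj (U$$(q,i) * V$$(q,j)) * x q) = (\<Sum>q<n. \<Sum>l<n. g l * (cnj (U$$(q,i) * V$$(q,j)) * W$$(q,l)))"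
      unfolding x_def by (simp add: sum_distrib_left mult_ac)
    also have "\<dots> = (\<Sum>l<n. \<Sum>q<n. g l * (cnj (U$$(q,i) * V$$(q,j)) * W$$(q,l)))"
      by (rule sum.swap)
    also have "\<dots> = (\<Sum>l<n. g l * E r l)"
      unfolding E_def rdiv rmod by (simp add: sum_distrib_left)
    also have "\<dots> = (\<Sum>l<Suc m. E r l * y $ l)"
      by (rule sum.mono_neutral_cong_right) (use m in \<open>auto simp: g_def\<close>)
    finally show "(\<Sum>q<n. cnj (U$$(q,i) * V$$(q,j)) * x q) = 0" using e by simp
  qed
  have xg: "\<forall>q. x q = (\<Sum>l<n. g l * W$$(q,l))" unfolding x_def by simp
  note LB = lower_bound[OF colW rowW _ csort m gz xg, where M = "\<lambda>p q. C$$(p,q)"]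
  have L1: "(\<Sum>p<n. \<Sum>q<n. cnj (x p) * C$$(p,q) * x q) = of_real (\<Sum>t<n. c t * (cmod (g t))^2)"
    using LB(1) Cent by blast
  have L2: "c m * (\<Sum>t<n. (cmod (g t))^2) \<le> (\<Sum>t<n. c t * (cmod (g t))^2)"
    using LB(2) Cent by blast
  have L3: "(\<Sum>q<n. (cmod (x q))^2) = (\<Sum>t<n. (cmod (g t))^2)"
    using LB(3) Cent by blast
  have "(\<Sum>p<n. \<Sum>q<n. cnj (x p) * C$$(p,q) * x q) = of_real (\<Sum>t\<in>{..<n}\<times>{..<n}.
       a (fst t) * b (snd t) * (cmod (\<Sum>q<n. cnj (U$$(q,fst t) * V$$(q,snd t)) * x q))^2)"
    by (rule quad_expand[where f = "\<lambda>t p. U$$(p,fst t) * V$$(p,snd t)"]) (use Cent2 in auto)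
  also have "(\<Sum>t\<in>{..<n}\<times>{..<n}. a (fst t) * b (snd t) * (cmod (\<Sum>q<n. cnj (U$$(q,fst t) * V$$(q,snd t)) * x q))^2)
     = (\<Sum>(i,j)\<in>{..<n}\<times>{..<n}. a i * b j * (cmod (\<Sum>q<n. cnj (U$$(q,i) * V$$(q,j)) * x q))^2)"
    by (simp add: split_def)
  finally have U1: "(\<Sum>p<n. \<Sum>q<n. cnj (x p) * C$$(p,q) * x q) = of_real (\<Sum>(i,j)\<in>{..<n}\<times>{..<n}. a i * b j * (cmod (\<Sum>q<n. cnj (U$$(q,i) * V$$(q,j)) * x q))^2)" .
  note U2 = upper_bound[OF rowU rowV a0 a1 b0 b1 z0]
  define X where "X = (\<Sum>t<n. (cmod (g t))^2)"
  define TA where "TA = (\<Sum>i<n. if k \<le> i then a i else 0)"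
  define TB where "TB = (\<Sum>j<n. if h \<le> j then b j else 0)"
  have S: "(\<Sum>(i,j)\<in>{..<n}\<times>{..<n}. a i * b j * (cmod (\<Sum>q<n. cnj (U$$(q,i) * V$$(q,j)) * x q))^2)
      = (\<Sum>t<n. c t * (cmod (g t))^2)"
  proof -
    have "complex_of_real (\<Sum>(i,j)\<in>{..<n}\<times>{..<n}. a i * b j * (cmod (\<Sum>q<n. cnj (U$$(q,i) * V$$(q,j)) * x q))^2)
      = complex_of_real (\<Sum>t<n. c t * (cmod (g t))^2)"
      by (rule trans[OF U1[symmetric] L1])
    then show ?thesis by (simp only: of_real_eq_iff)
  qed
  have key: "c m * X \<le> (a 0 * TB + b 0 * TA) * X"
    using L2 U2[unfolded L3] S unfolding X_def TA_def TB_def by linarith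
  have Xpos: "X > 0"
  proof -
    have "\<exists>l<Suc m. y $ l \<noteq> 0"
    proof (rule ccontr)
      assume "\<not> (\<exists>l<Suc m. y $ l \<noteq> 0)"
      then have "y = 0\<^sub>v (Suc m)" using y by (intro eq_vecI) auto
      with y0 show False by simp
    qed
    then obtain l where l: "l < Suc m" and yl: "y $ l \<noteq> 0" by blast
    have "0 < (cmod (g l))^2" using l yl by (simp add: g_def)
    then show ?thesis unfolding X_def
      by (intro sum_pos2[of _ l]) (use l m in auto)
  qed
  have cm: "c m \<le> a 0 * TB + b 0 * TA" using key Xpos by simp
  have TA0: "TA \<ge> 0" unfolding TA_def using a0 by (intro sum_nonneg) auto
  have TB0: "TB \<ge> 0" unfolding TB_def using b0 by (intro sum_nonneg) auto
  have tA: "tail_trace k A = TA" unfolding TA_def by (rule tail_eq[OF aeig]) (use A in auto)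
  have tB: "tail_trace h B = TB" unfolding TB_def by (rule tail_eq[OF beig]) (use B in auto)
  have e1: "eig (k * h + 1) (hadamard A B) = c m" using ceig m unfolding C_def m_def by simp
  have e2: "eig 1 A = a 0" using aeig n0 by simp
  have e3: "eig 1 B = b 0" using beig n0 by simp
  show ?thesis unfolding e1 e2 e3 tA tB using cm TA0 TB0
    by (smt (verit) mult_nonneg_nonneg)
qed

end
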